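(* Let $X$ be a connected weighted bipartite graph with vertex $u$ such that $0\in\Phi_{\mathbf e_u}$. Suppose $S$ is a nonempty subset of $\Phi_{\mathbf e_u}\cap\mathbb R^+$ with $\sum_{\lambda\in S}(E_\lambda)_{u,u}\ge\frac14$. If either (i) $S$ is linearly independent over $\mathbb Q$, or (ii) $S$ consists of integers all having the same exponent of $2$ in their prime factorizations, then $u$ is not sedentary.
   Context: Graphs are simple, connected, undirected, with nonzero real edge weights; $A=A(X)=\sum_\lambda\lambda E_\lambda$ is the spectral decomposition of the weighted adjacency matrix over its distinct eigenvalues, $E_\lambda$ the orthogonal projection onto the $\lambda$-eigenspace; $\Phi_{\mathbf e_u}=\{\lambda:E_\lambda\mathbf e_u\ne0\}$. With $U(t)=e^{itA}$, $u$ is not sedentary if $\inf_{t>0}|U(t)_{u,u}|=0$. *)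

theory Defs
  imports "HOL-Analysis.Analysis" "HOL-Computational_Algebra.Computational_Algebra"
begin

text \<open>Weighted graphs on a finite vertex type 'n, given by their weighted adjacency matrix.\<close>

definition simple_weighted_graph :: "real^'n^'n \<Rightarrow> bool" where
  "simple_weighted_graph A \<longleftrightarrow> transpose A = A \<and> (\<forall>i. A $ i $ i = 0)"

definition graph_connected :: "real^'n^'n \<Rightarrow> bool" where
  "graph_connected A \<longleftrightarrow> (\<forall>i j. (i, j) \<in> {(x, y). A $ x $ y \<noteq> 0}\<^sup>*)"

definition graph_bipartite :: "real^'n^'n \<Rightarrow> bool" where
  "graph_bipartite A \<longleftrightarrow> (\<exists>V1. \<forall>i j. A $ i $ j \<noteq> 0 \<longrightarrow> (i \<in> V1 \<longleftrightarrow> j \<notin> V1))"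

definition eigenspace :: "real^'n^'n \<Rightarrow> real \<Rightarrow> (real^'n) set" where
  "eigenspace A lam = {v. A *v v = lam *\<^sub>R v}"

definition is_eigenvalue :: "real^'n^'n \<Rightarrow> real \<Rightarrow> bool" where
  "is_eigenvalue A lam \<longleftrightarrow> (\<exists>v. v \<noteq> 0 \<and> A *v v = lam *\<^sub>R v)"

definition orth_proj_matrix :: "(real^'n) set \<Rightarrow> real^'n^'n" where
  "orth_proj_matrix W = (THE P. \<forall>x. P *v x \<in> W \<and> (\<forall>w\<in>W. inner (x - P *v x) w = 0))"

definition eigenproj :: "real^'n^'n \<Rightarrow> real \<Rightarrow> real^'n^'n" where
  "eigenproj A lam = orth_proj_matrix (eigenspace A lam)"

definition eig_support :: "real^'n^'n \<Rightarrow> 'n \<Rightarrow> real set" where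
  "eig_support A u = {lam. is_eigenvalue A lam \<and> eigenproj A lam *v axis u 1 \<noteq> 0}"

fun mat_pow :: "'a::semiring_1^'n^'n \<Rightarrow> nat \<Rightarrow> 'a^'n^'n" where
  "mat_pow M 0 = mat 1"
| "mat_pow M (Suc k) = M ** mat_pow M k"

definition transition :: "real^'n^'n \<Rightarrow> real \<Rightarrow> complex^'n^'n" where
  "transition A t = (\<chi> i j. (\<Sum>k. (\<i> * complex_of_real t) ^ k / fact k *
       mat_pow (\<chi> a b. complex_of_real (A $ a $ b)) k $ i $ j))"

definition sedentary :: "real^'n^'n \<Rightarrow> 'n \<Rightarrow> bool" where
  "sedentary A u \<longleftrightarrow> (INF t\<in>{0<..}. norm (transition A t $ u $ u)) > 0"

definition lin_indep_over_Q :: "real set \<Rightarrow> bool" where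
  "lin_indep_over_Q S \<longleftrightarrow> (\<forall>T c. finite T \<and> T \<subseteq> S \<and>
      (\<Sum>x\<in>T. of_rat (c x) * x) = 0 \<longrightarrow> (\<forall>x\<in>T. c x = 0))"

end

theory Submission
  imports Defs
begin

lemma sym_inner:
  fixes A :: "real^'n^'n"
  assumes "transpose A = A" shows "inner (A *v x) y = inner x (A *v y)"
  by (metis assms dot_lmul_matrix transpose_matrix_vector)

lemma subspace_eigenspace: "subspace (eigenspace (A::real^'n^'n) lam)"
  unfolding subspace_def eigenspace_def
  by (auto simp: matrix_vector_right_distrib matrix_vector_mult_scaleR scaleR_add_right)

lemma proj_unique:
  fixes W :: "(real^'n) set"
  assumes "subspace W" "y1 \<in> W" "\<forall>w\<in>W. inner (x - y1) w = 0" "y2 \<in> W" "\<forall>w\<in>W. inner (x - y2) w = 0"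
  shows "y1 = y2"
proof -
  have d: "y1 - y2 \<in> W" using assms subspace_diff by blast
  hence "inner (x - y2) (y1 - y2) - inner (x - y1) (y1 - y2) = 0" using assms by simp
  hence "inner (y1 - y2) (y1 - y2) = 0" by (simp add: inner_diff_left)
  thus ?thesis by simp
qed

lemma proj_vec_exists:
  fixes W :: "(real^'n) set"
  assumes "subspace W" shows "\<exists>y. y \<in> W \<and> (\<forall>w\<in>W. inner (x - y) w = 0)"
proof -
  obtain y z where "y \<in> span W" "\<And>w. w \<in> span W \<Longrightarrow> orthogonal z w" "x = y + z"
    using orthogonal_subspace_decomp_exists[of W x] by metis
  moreover have "span W = W" using assms span_eq_iff[of W] by simp
  ultimately show ?thesis by (intro exI[of _ y]) (auto simp: orthogonal_def)
qed

definition pv :: "(real^'n) set \<Rightarrow> real^'n \<Rightarrow> real^'n" where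
  "pv W x = (SOME y. y \<in> W \<and> (\<forall>w\<in>W. inner (x - y) w = 0))"

lemma pv: "subspace W \<Longrightarrow> pv W x \<in> W \<and> (\<forall>w\<in>W. inner (x - pv W x) w = 0)"
  unfolding pv_def using proj_vec_exists by (rule someI_ex) 

lemma pv_eq: "subspace W \<Longrightarrow> y \<in> W \<Longrightarrow> \<forall>w\<in>W. inner (x - y) w = 0 \<Longrightarrow> pv W x = y"
  using pv proj_unique by metis

lemma pv_linear: assumes "subspace W" shows "linear (pv W)"
proof (rule linearI)
  fix x y
  show "pv W (x + y) = pv W x + pv W y"
  proof (rule pv_eq[OF assms])
    show "pv W x + pv W y \<in> W" using pv[OF assms] assms subspace_add by blast
    show "\<forall>w\<in>W. inner (x + y - (pv W x + pv W y)) w = 0"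
    proof
      fix w assume "w \<in> W"
      then have "inner (x - pv W x) w = 0" "inner (y - pv W y) w = 0" using pv[OF assms] by auto
      then show "inner (x + y - (pv W x + pv W y)) w = 0"
        by (simp add: inner_diff_left inner_add_left)
    qed
  qed
next
  fix c :: real and x
  show "pv W (c *\<^sub>R x) = c *\<^sub>R pv W x"
  proof (rule pv_eq[OF assms])
    show "c *\<^sub>R pv W x \<in> W" using pv[OF assms] assms subspace_scale by blast
    show "\<forall>w\<in>W. inner (c *\<^sub>R x - c *\<^sub>R pv W x) w = 0"
    proof
      fix w assume "w \<in> W"
      then have "inner (x - pv W x) w = 0" using pv[OF assms] by auto
      then show "inner (c *\<^sub>R x - c *\<^sub>R pv W x) w = 0"
        by (metis inner_scaleR_left mult_zero_right scaleR_right_diff_distrib)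
    qed
  qed
qed

lemma opm: fixes W :: "(real^'n) set" assumes "subspace W" shows "orth_proj_matrix W *v x = pv W x"
proof -
  let ?P = "\<lambda>P::real^'n^'n. \<forall>x. P *v x \<in> W \<and> (\<forall>w\<in>W. inner (x - P *v x) w = 0)"
  have lin: "Vector_Spaces.linear (*s) (*s) (pv W)"
    using pv_linear[OF assms] linear_matrix_vector_mul_eq by blast
  have ex: "?P (matrix (pv W))"
    using matrix_works[OF lin] pv[OF assms] by simp
  have un: "P = matrix (pv W)" if "?P P" for P
    unfolding matrix_eq
    using that matrix_works[OF lin] pv_eq[OF assms] by metis
  have "?P (orth_proj_matrix W)" unfolding orth_proj_matrix_def
    by (rule theI[of ?P, OF ex un]) 
  then have "orth_proj_matrix W = matrix (pv W)" using un by blast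
  then show ?thesis using matrix_works[OF lin] by simp
qed

lemma eigenproj_pv: "eigenproj A lam *v x = pv (eigenspace A lam) x"
  unfolding eigenproj_def using opm subspace_eigenspace by blast

lemma eigenproj_in: "A *v (eigenproj A lam *v x) = lam *\<^sub>R (eigenproj A lam *v x)"
  using pv[OF subspace_eigenspace, of A lam x] unfolding eigenproj_pv eigenspace_def by auto

lemma eigenproj_orth: "A *v w = lam *\<^sub>R w \<Longrightarrow> inner (x - eigenproj A lam *v x) w = 0"
  using pv[OF subspace_eigenspace, of A lam x] unfolding eigenproj_pv eigenspace_def by auto

lemma sym_eig_orth:
  fixes A :: "real^'n^'n"
  assumes "transpose A = A" "A *v v = a *\<^sub>R v" "A *v w = b *\<^sub>R w" "a \<noteq> b"
  shows "inner v w = 0"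
proof -
  have "a * inner v w = b * inner v w"
    using sym_inner[OF assms(1), of v w] assms(2,3) by simp
  thus ?thesis using assms(4) by simp
qed

lemma finite_eigs:
  fixes A :: "real^'n^'n"
  assumes sym: "transpose A = A" shows "finite {lam. is_eigenvalue A lam}"
proof -
  define L where "L = {lam. is_eigenvalue A lam}"
  define ev where "ev lam = (SOME v. v \<noteq> 0 \<and> A *v v = lam *\<^sub>R v)" for lam
  have ev: "ev lam \<noteq> 0 \<and> A *v ev lam = lam *\<^sub>R ev lam" if "lam \<in> L" for lam
    using that unfolding L_def is_eigenvalue_def ev_def by (metis (mono_tags, lifting) mem_Collect_eq someI_ex)
  have inj: "inj_on ev L"
  proof (rule inj_onI)
    fix a b assume "a \<in> L" "b \<in> L" "ev a = ev b"
    then have "a *\<^sub>R ev a = b *\<^sub>R ev a" "ev a \<noteq> 0" using ev by metis+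
    then show "a = b" by (simp add: scaleR_cancel_right)
  qed
  have po: "pairwise orthogonal (ev ` L)"
    unfolding pairwise_def orthogonal_def
  proof (clarify)
    fix a b assume "a \<in> L" "b \<in> L" "ev a \<noteq> ev b"
    then have "a \<noteq> b" by auto
    then show "inner (ev a) (ev b) = 0" using sym_eig_orth[OF sym] ev \<open>a \<in> L\<close> \<open>b \<in> L\<close> by blast
  qed
  have "0 \<notin> ev ` L" using ev by auto
  then have "independent (ev ` L)" using po pairwise_orthogonal_independent by blast
  then have "finite (ev ` L)" using independent_bound by blast
  then show ?thesis using inj finite_imageD L_def by blast
qed

lemma quad_zero:
  fixes b c :: real
  assumes "c \<ge> 0" "\<And>s. 2 * s * b \<le> s^2 * c"
  shows "b = 0"
proof -
  have i: "2 * (b/(c+1)) * b \<le> (b/(c+1))^2 * c" using assms(2) .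
  have h: "2 * (b/(c+1)) * b * (c+1)^2 \<le> (b/(c+1))^2 * c * (c+1)^2"
    using mult_right_mono[OF i, of "(c+1)^2"] by simp
  have g1: "\<And>d::real. d \<noteq> 0 \<Longrightarrow> 2 * (b/d) * b * d^2 = 2*b^2*d"
    by (simp add: field_simps power2_eq_square)
  have g2: "\<And>d::real. d \<noteq> 0 \<Longrightarrow> (b/d)^2 * c * d^2 = b^2*c"
    by (simp add: field_simps power2_eq_square)
  have "c + 1 \<noteq> 0" using assms(1) by simp
  note e1 = g1[OF this] and e2 = g2[OF this]
  have "2 * b^2 * (c+1) \<le> b^2 * c" using h e1 e2 by simp
  then have "b^2 * (c + 2) \<le> 0" by (simp add: algebra_simps)
  moreover have "b^2 * (c+2) \<ge> 0" using assms(1) by simp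
  ultimately have "b^2 * (c+2) = 0" by linarith
  then show ?thesis using assms(1) by simp
qed

lemma eigvec_in_invariant:
  fixes A :: "real^'n^'n"
  assumes sym: "transpose A = A" and sub: "subspace R" and inv: "\<forall>x\<in>R. A *v x \<in> R"
    and "r \<in> R" "r \<noteq> 0"
  shows "\<exists>x\<in>R. x \<noteq> 0 \<and> (\<exists>m. A *v x = m *\<^sub>R x)"
proof -
  define q where "q x = inner x (A *v x)" for x
  define K where "K = sphere (0::real^'n) 1 \<inter> R"
  have "compact K" unfolding K_def
    by (rule compact_Int_closed[OF compact_sphere closed_subspace[OF sub]])
  moreover have "r /\<^sub>R norm r \<in> K" unfolding K_def using \<open>r \<in> R\<close> \<open>r \<noteq> 0\<close> sub
    by (simp add: subspace_scale)
  then have "K \<noteq> {}" by blast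
  moreover have "continuous_on K q" unfolding q_def
    by (intro continuous_intros matrix_vector_mult_linear_continuous_on)
  ultimately obtain x0 where x0: "x0 \<in> K" "\<And>y. y \<in> K \<Longrightarrow> q y \<le> q x0"
    using continuous_attains_sup by metis
  define m where "m = q x0"
  have x0R: "x0 \<in> R" and nx0: "norm x0 = 1" using x0(1) unfolding K_def by auto
  have qscale: "q (c *\<^sub>R y) = c^2 * q y" for c y
    unfolding q_def by (simp add: matrix_vector_mult_scaleR power2_eq_square)
  have Q: "q y \<le> m * inner y y" if "y \<in> R" for y
  proof (cases "y = 0")
    case True then show ?thesis by (simp add: q_def)
  next
    case False
    have "y /\<^sub>R norm y \<in> K" unfolding K_def using that False sub by (simp add: subspace_scale)
    then have "q (y /\<^sub>R norm y) \<le> m" using x0 m_def by blast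
    then have "q y / (norm y)^2 \<le> m" using qscale[of "inverse (norm y)" y]
      by (simp add: power_inverse divide_inverse mult.commute)
    then have "q y \<le> m * (norm y)^2" using False by (simp add: divide_le_eq)
    then show ?thesis by (simp add: power2_norm_eq_inner)
  qed
  have B: "inner x0 (A *v y) = m * inner x0 y" if "y \<in> R" for y
  proof -
    define b where "b = inner x0 (A *v y) - m * inner x0 y"
    define c where "c = m * inner y y - q y"
    have "c \<ge> 0" using Q[OF that] c_def by simp
    moreover have "2 * s * b \<le> s^2 * c" for s
    proof -
      have "x0 + s *\<^sub>R y \<in> R" using x0R that sub by (simp add: subspace_add subspace_scale)
      then have h1: "q (x0 + s *\<^sub>R y) \<le> m * inner (x0 + s *\<^sub>R y) (x0 + s *\<^sub>R y)" by (rule Q)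
      have yx: "inner y (A *v x0) = inner x0 (A *v y)"
        using sym_inner[OF sym, of y x0] by (simp add: inner_commute)
      have h2: "q (x0 + s *\<^sub>R y) = m + 2 * s * inner x0 (A *v y) + s^2 * q y"
        unfolding m_def q_def
        by (simp add: matrix_vector_right_distrib matrix_vector_mult_scaleR inner_add_left inner_add_right
              yx power2_eq_square algebra_simps)
      have xx: "inner x0 x0 = 1" using nx0 by (metis power2_norm_eq_inner one_power2)
      have h3: "inner (x0 + s *\<^sub>R y) (x0 + s *\<^sub>R y) = 1 + 2 * s * inner x0 y + s^2 * inner y y"
        by (simp add: inner_add_left inner_add_right inner_commute[of y x0] xx power2_eq_square algebra_simps)
      have alg: "\<And>Q n m B0 qy a yy s::real. Q = m + 2 * s * B0 + s^2*qy \<Longrightarrow> n = 1 + 2 * s * a + s^2*yy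
          \<Longrightarrow> 2 * s * (B0 - m*a) - s^2*(m*yy - qy) = Q - m*n" by algebra
      have "2 * s * b - s^2 * c = q (x0 + s *\<^sub>R y) - m * inner (x0 + s *\<^sub>R y) (x0 + s *\<^sub>R y)"
        unfolding b_def c_def by (rule alg[OF h2 h3])
      then show ?thesis using h1 by linarith
    qed
    ultimately have "b = 0" by (rule quad_zero)
    then show ?thesis unfolding b_def by simp
  qed
  define y where "y = A *v x0 - m *\<^sub>R x0"
  have yR: "y \<in> R" unfolding y_def using inv x0R sub by (simp add: subspace_diff subspace_scale)
  have "inner x0 (A *v y) = inner (A *v x0) y" using sym_inner[OF sym] by simp
  also have "\<dots> = inner (y + m *\<^sub>R x0) y" unfolding y_def by simp
  also have "\<dots> = inner y y + m * inner x0 y" by (simp add: inner_add_left)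
  finally have "inner y y = 0" using B[OF yR] by simp
  then have "A *v x0 = m *\<^sub>R x0" unfolding y_def by simp
  moreover have "x0 \<noteq> 0" using nx0 by auto
  ultimately show ?thesis using x0R by blast
qed

lemma eig_complete:
  fixes A :: "real^'n^'n"
  assumes sym: "transpose A = A"
  shows "x = (\<Sum>lam\<in>{lam. is_eigenvalue A lam}. eigenproj A lam *v x)"
proof -
  define L where "L = {lam. is_eigenvalue A lam}"
  have fin: "finite L" using finite_eigs[OF sym] L_def by simp
  define r where "r = x - (\<Sum>lam\<in>L. eigenproj A lam *v x)"
  define R where "R = {z. \<forall>w mu. A *v w = mu *\<^sub>R w \<longrightarrow> inner z w = 0}"
  have sub: "subspace R" unfolding R_def subspace_def
    by (auto simp: inner_add_left)
  have inv: "\<forall>z\<in>R. A *v z \<in> R" unfolding R_def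
    using sym_inner[OF sym] by auto
  have rR: "r \<in> R" unfolding R_def mem_Collect_eq
  proof (intro allI impI)
    fix w mu assume w: "A *v w = mu *\<^sub>R w"
    show "inner r w = 0"
    proof (cases "w = 0")
      case True then show ?thesis by simp
    next
      case False
      then have muL: "mu \<in> L" using w unfolding L_def is_eigenvalue_def by blast
      have "inner (eigenproj A lam *v x) w = (if lam = mu then inner x w else 0)" for lam
      proof (cases "lam = mu")
        case True
        then show ?thesis using eigenproj_orth[OF w, of x] by (simp add: inner_diff_left)
      next
        case False
        then show ?thesis using sym_eig_orth[OF sym eigenproj_in w] by simp
      qed
      then have "inner (\<Sum>lam\<in>L. eigenproj A lam *v x) w = inner x w"
        using fin muL by (simp add: inner_sum_left)
      then show ?thesis unfolding r_def by (simp add: inner_diff_left)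
    qed
  qed
  have "r = 0"
  proof (rule ccontr)
    assume "r \<noteq> 0"
    then obtain e m where "e \<in> R" "e \<noteq> 0" "A *v e = m *\<^sub>R e"
      using eigvec_in_invariant[OF sym sub inv rR] by blast
    then have "inner e e = 0" unfolding R_def by blast
    then show False using \<open>e \<noteq> 0\<close> by simp
  qed
  then show ?thesis unfolding r_def L_def by simp
qed

lemma pow_decomp:
  fixes A :: "real^'n^'n"
  assumes sym: "transpose A = A"
  shows "mat_pow A k *v x = (\<Sum>lam\<in>{lam. is_eigenvalue A lam}. lam^k *\<^sub>R (eigenproj A lam *v x))"
proof (induction k)
  case 0
  then show ?case using eig_complete[OF sym, of x] by (simp add: matrix_vector_mul_lid)
next
  case (Suc k)
  have "mat_pow A (Suc k) *v x = A *v (mat_pow A k *v x)" by (simp add: matrix_vector_mul_assoc)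
  also have "\<dots> = (\<Sum>lam\<in>{lam. is_eigenvalue A lam}. lam^k *\<^sub>R (A *v (eigenproj A lam *v x)))"
    unfolding Suc vec.sum by (simp add: matrix_vector_mult_scaleR)
  also have "\<dots> = (\<Sum>lam\<in>{lam. is_eigenvalue A lam}. lam^(Suc k) *\<^sub>R (eigenproj A lam *v x))"
    by (simp add: eigenproj_in mult.commute)
  finally show ?case .
qed

lemma mat_entry: fixes M :: "real^'n^'n" shows "(M *v axis j 1) $ i = M $ i $ j"
  by (simp add: matrix_vector_mult_def axis_def if_distrib cong: if_cong)

lemma pow_entry:
  fixes A :: "real^'n^'n"
  assumes sym: "transpose A = A"
  shows "mat_pow A k $ u $ u = (\<Sum>lam\<in>{lam. is_eigenvalue A lam}. lam^k * eigenproj A lam $ u $ u)"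
proof -
  have "mat_pow A k $ u $ u = (mat_pow A k *v axis u 1) $ u" by (simp add: mat_entry)
  also have "\<dots> = (\<Sum>lam\<in>{lam. is_eigenvalue A lam}. lam^k * (eigenproj A lam *v axis u 1) $ u)"
    unfolding pow_decomp[OF sym] by (simp add: sum_component)
  finally show ?thesis by (simp add: mat_entry)
qed

lemma mat_pow_complex:
  "mat_pow (\<chi> a b. complex_of_real (A $ a $ b)) k $ i $ j = complex_of_real (mat_pow A k $ i $ j)"
proof (induction k arbitrary: i j)
  case 0
  then show ?case by (simp add: mat_def)
next
  case (Suc k)
  then show ?case by (simp add: matrix_matrix_mult_def of_real_sum)
qed

lemma exp_sums_complex: "(\<lambda>n. z^n / fact n) sums exp (z::complex)"
  using exp_converges[of z] by (simp add: scaleR_conv_of_real divide_inverse mult.commute)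

lemma transition_uu:
  fixes A :: "real^'n^'n"
  assumes sym: "transpose A = A"
  shows "transition A t $ u $ u = (\<Sum>lam\<in>{lam. is_eigenvalue A lam}.
            complex_of_real (eigenproj A lam $ u $ u) * exp (\<i> * complex_of_real (t * lam)))"
proof -
  let ?L = "{lam. is_eigenvalue A lam}"
  have fin: "finite ?L" using finite_eigs[OF sym] .
  have "(\<lambda>k. \<Sum>lam\<in>?L. complex_of_real (eigenproj A lam $ u $ u) *
           ((\<i> * complex_of_real (t * lam))^k / fact k)) sums
        (\<Sum>lam\<in>?L. complex_of_real (eigenproj A lam $ u $ u) * exp (\<i> * complex_of_real (t * lam)))"
    by (intro sums_sum sums_mult exp_sums_complex)
  moreover have "(\<lambda>k. \<Sum>lam\<in>?L. complex_of_real (eigenproj A lam $ u $ u) *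
           ((\<i> * complex_of_real (t * lam))^k / fact k)) =
       (\<lambda>k. (\<i> * complex_of_real t) ^ k / fact k *
       mat_pow (\<chi> a b. complex_of_real (A $ a $ b)) k $ u $ u)"
  proof
    fix k
    show "(\<Sum>lam\<in>?L. complex_of_real (eigenproj A lam $ u $ u) *
           ((\<i> * complex_of_real (t * lam))^k / fact k)) =
       (\<i> * complex_of_real t) ^ k / fact k * mat_pow (\<chi> a b. complex_of_real (A $ a $ b)) k $ u $ u"
      unfolding mat_pow_complex pow_entry[OF sym] of_real_sum sum_distrib_left
      by (intro sum.cong refl) (simp add: power_mult_distrib)
  qed
  ultimately show ?thesis unfolding transition_def by (simp add: sums_iff)
qed

definition flipv :: "'n set \<Rightarrow> real^'n \<Rightarrow> real^'n" where
  "flipv V x = (\<chi> i. (if i \<in> V then 1 else -1) * x $ i)"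

lemma flipv_flipv[simp]: "flipv V (flipv V x) = x"
  by (simp add: flipv_def vec_eq_iff)

lemma flipv_inner: "inner (flipv V x) (flipv V y) = inner x y"
  by (auto simp: flipv_def inner_vec_def intro!: sum.cong)

lemma flipv_neg: "flipv V (- x) = - flipv V x"
  by (simp add: flipv_def vec_eq_iff)

lemma flipv_zero: "flipv V 0 = 0"
  by (simp add: flipv_def vec_eq_iff)

lemma flipv_diff: "flipv V (x - y) = flipv V x - flipv V y"
  by (simp add: flipv_def vec_eq_iff algebra_simps)

lemma flipv_scale: "flipv V (c *\<^sub>R x) = c *\<^sub>R flipv V x"
  by (simp add: flipv_def vec_eq_iff algebra_simps)

lemma flipv_A:
  fixes A :: "real^'n^'n"
  assumes "\<forall>i j. A $ i $ j \<noteq> 0 \<longrightarrow> (i \<in> V \<longleftrightarrow> j \<notin> V)"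
  shows "A *v flipv V x = - flipv V (A *v x)"
proof -
  have "A $ i $ j * ((if j \<in> V then 1 else -1) * x $ j) =
        - ((if i \<in> V then 1 else -1) * (A $ i $ j * x $ j))" for i j
    using assms by (cases "A $ i $ j = 0") auto
  then show ?thesis
    by (simp add: flipv_def vec_eq_iff matrix_vector_mult_def sum_distrib_left sum_negf)
qed

lemma eigenproj_char:
  fixes A :: "real^'n^'n"
  assumes "A *v y = lam *\<^sub>R y" "\<And>w. A *v w = lam *\<^sub>R w \<Longrightarrow> inner (x - y) w = 0"
  shows "eigenproj A lam *v x = y"
  unfolding eigenproj_pv
  by (rule pv_eq[OF subspace_eigenspace]) (use assms in \<open>auto simp: eigenspace_def\<close>)

lemma eigenproj_neg:
  fixes A :: "real^'n^'n"
  assumes V: "\<forall>i j. A $ i $ j \<noteq> 0 \<longrightarrow> (i \<in> V \<longleftrightarrow> j \<notin> V)"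
  shows "eigenproj A (-lam) *v x = flipv V (eigenproj A lam *v flipv V x)"
proof (rule eigenproj_char)
  show "A *v flipv V (eigenproj A lam *v flipv V x) = (-lam) *\<^sub>R flipv V (eigenproj A lam *v flipv V x)"
    unfolding flipv_A[OF V] eigenproj_in by (simp add: flipv_scale)
  fix w assume w: "A *v w = (-lam) *\<^sub>R w"
  have fw: "A *v flipv V w = lam *\<^sub>R flipv V w"
    unfolding flipv_A[OF V] w by (simp add: flipv_scale flipv_neg)
  have "inner (x - flipv V (eigenproj A lam *v flipv V x)) w =
        inner (flipv V x - eigenproj A lam *v flipv V x) (flipv V w)"
    by (metis flipv_diff flipv_flipv flipv_inner)
  also have "\<dots> = 0" by (rule eigenproj_orth[OF fw])
  finally show "inner (x - flipv V (eigenproj A lam *v flipv V x)) w = 0" .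
qed

lemma flipv_axis: "flipv V (axis u 1) = (if u \<in> V then 1 else -1) *\<^sub>R axis u 1"
  by (simp add: flipv_def vec_eq_iff axis_def)

lemma c_neg:
  fixes A :: "real^'n^'n"
  assumes V: "\<forall>i j. A $ i $ j \<noteq> 0 \<longrightarrow> (i \<in> V \<longleftrightarrow> j \<notin> V)"
  shows "eigenproj A (-lam) $ u $ u = eigenproj A lam $ u $ u"
proof -
  have "eigenproj A (-lam) $ u $ u = (eigenproj A (-lam) *v axis u 1) $ u" by (simp add: mat_entry)
  also have "\<dots> = (if u \<in> V then 1 else -1) * ((if u \<in> V then 1 else -1) * (eigenproj A lam *v axis u 1) $ u)"
    unfolding eigenproj_neg[OF V] flipv_axis matrix_vector_mult_scaleR
    by (simp add: flipv_def)
  also have "\<dots> = eigenproj A lam $ u $ u" by (simp add: mat_entry)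
  finally show ?thesis .
qed

lemma eig_neg:
  fixes A :: "real^'n^'n"
  assumes V: "\<forall>i j. A $ i $ j \<noteq> 0 \<longrightarrow> (i \<in> V \<longleftrightarrow> j \<notin> V)"
    and "is_eigenvalue A lam"
  shows "is_eigenvalue A (-lam)"
proof -
  obtain v where "v \<noteq> 0" "A *v v = lam *\<^sub>R v" using assms(2) is_eigenvalue_def by blast
  then have "flipv V v \<noteq> 0" "A *v flipv V v = (-lam) *\<^sub>R flipv V v"
    by (metis flipv_flipv flipv_zero, simp add: flipv_A[OF V] flipv_scale)
  then show ?thesis unfolding is_eigenvalue_def by blast
qed

lemma c_nonneg:
  fixes A :: "real^'n^'n"
  shows "eigenproj A lam $ u $ u \<ge> 0"
proof -
  let ?x = "axis u 1 :: real^'n" let ?y = "eigenproj A lam *v ?x"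
  have "eigenproj A lam $ u $ u = inner ?x ?y" by (simp add: mat_entry inner_axis')
  also have "\<dots> = inner (?x - ?y) ?y + inner ?y ?y" by (simp add: inner_diff_left)
  also have "\<dots> = inner ?y ?y" using eigenproj_orth[OF eigenproj_in] by simp
  finally show ?thesis by simp
qed

lemma c_sum:
  fixes A :: "real^'n^'n"
  assumes sym: "transpose A = A"
  shows "(\<Sum>lam\<in>{lam. is_eigenvalue A lam}. eigenproj A lam $ u $ u) = 1"
proof -
  have "1 = (axis u 1 :: real^'n) $ u" by simp
  also have "\<dots> = (\<Sum>lam\<in>{lam. is_eigenvalue A lam}. eigenproj A lam *v axis u 1) $ u"
    using eig_complete[OF sym, of "axis u 1"] by simp
  also have "\<dots> = (\<Sum>lam\<in>{lam. is_eigenvalue A lam}. eigenproj A lam $ u $ u)"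
    by (simp add: sum_component mat_entry)
  finally show ?thesis by simp
qed

lemma kron_S:
  fixes S :: "real set"
  assumes "finite S" "lin_indep_over_Q S" "\<delta> > 0"
  shows "\<exists>t. \<forall>lam\<in>S. \<exists>h::int. \<bar>t * lam - of_int h - 1/2\<bar> < \<delta>"
proof -
  have mod: "module (\<lambda>r. (*) (real_of_int r))"
    by (simp add: Modules.module.intro distrib_left mult.commute)
  obtain \<theta> where bij: "bij_betw \<theta> {0..<card S} S" using ex_bij_betw_nat_finite[OF assms(1)] by blast
  have img: "\<theta> ` {..<card S} = S" using bij by (simp add: bij_betw_def lessThan_atLeast0)
  have inj: "inj_on \<theta> {..<card S}" using bij by (simp add: bij_betw_def lessThan_atLeast0)
  have ind: "module.independent (\<lambda>r. (*) (real_of_int r)) (\<theta> ` {..<card S})"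
    unfolding img Modules.module.independent_explicit_module[OF mod]
  proof (intro allI impI)
    fix T u v
    assume T: "finite T" "T \<subseteq> S" "(\<Sum>v\<in>T. real_of_int (u v) * v) = 0" "v \<in> T"
    have "(\<Sum>x\<in>T. of_rat (of_int (u x)) * x) = 0" using T(3) by simp
    then have "(of_int (u v) :: rat) = 0"
      using assms(2)[unfolded lin_indep_over_Q_def, rule_format, of T "\<lambda>x. of_int (u x)" v] T(1,2,4)
      by simp
    then show "u v = 0" by simp
  qed
  obtain t h where th: "\<And>i. i < card S \<Longrightarrow> \<bar>t * \<theta> i - of_int (h i) - 1/2\<bar> < \<delta>"
    using Kronecker_thm_1[OF ind inj assms(3), of "\<lambda>_. 1/2"] by blast
  show ?thesis
  proof (rule exI[of _ t], intro ballI)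
    fix lam assume "lam \<in> S"
    then obtain i where "i < card S" "lam = \<theta> i" using img by auto
    then show "\<exists>h::int. \<bar>t * lam - of_int h - 1/2\<bar> < \<delta>" using th by blast
  qed
qed

lemma one_minus_cos_le: "1 - cos x \<le> \<bar>x::real\<bar>"
proof -
  have "cos x = 1 - 2 * (sin (x/2))^2" using cos_double_sin[of "x/2"] by simp
  then have "1 - cos x = 2 * (sin (x/2))^2" by simp
  also have "\<dots> \<le> 2 * \<bar>sin (x/2)\<bar>"
  proof -
    have h1: "\<bar>sin (x/2)\<bar> \<le> 1" by simp
    have "\<bar>sin (x/2)\<bar> * \<bar>sin (x/2)\<bar> \<le> \<bar>sin (x/2)\<bar>"
      using mult_left_le[OF h1 abs_ge_zero] .
    moreover have "(sin (x/2))^2 = \<bar>sin (x/2)\<bar> * \<bar>sin (x/2)\<bar>" by (simp add: power2_eq_square)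
    ultimately show ?thesis by linarith
  qed
  also have "\<dots> \<le> 2 * \<bar>x/2\<bar>" using abs_sin_x_le_abs_x[of "x/2"] by simp
  finally show ?thesis by simp
qed

lemma int_half: "\<bar>0 - of_int (h::int) - 1/2\<bar> \<ge> (1/2::real)"
proof (cases "h \<ge> 0")
  case True then have "real_of_int h \<ge> 0" by simp
  then show ?thesis by simp
next
  case False then have "real_of_int h \<le> -1" by simp
  then show ?thesis by simp
qed

theorem corollary17:
  fixes A :: "real^'n^'n" and u :: 'n and S :: "real set"
  assumes "simple_weighted_graph A"
    and "graph_connected A"
    and "graph_bipartite A"
    and "0 \<in> eig_support A u"
    and "S \<noteq> {}"
    and "S \<subseteq> eig_support A u \<inter> {0<..}"
    and "(\<Sum>lam\<in>S. eigenproj A lam $ u $ u) \<ge> 1/4"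
    and "lin_indep_over_Q S \<or>
         (\<exists>e. \<forall>lam\<in>S. \<exists>m::int. lam = of_int m \<and> multiplicity (2::int) m = e)"
  shows "\<not> sedentary A u"
proof -
  from assms(1) have sym: "transpose A = A" by (simp add: simple_weighted_graph_def)
  from assms(3) obtain V where V: "\<forall>i j. A $ i $ j \<noteq> 0 \<longrightarrow> (i \<in> V \<longleftrightarrow> j \<notin> V)"
    unfolding graph_bipartite_def by blast
  define L where "L = {lam. is_eigenvalue A lam}"
  define c where "c lam = eigenproj A lam $ u $ u" for lam
  have finL: "finite L" using finite_eigs[OF sym] L_def by simp
  have Lneg: "- lam \<in> L" if "lam \<in> L" for lam using eig_neg[OF V] that L_def by simp
  have cneg: "c (- lam) = c lam" for lam unfolding c_def by (rule c_neg[OF V])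
  have c0: "c lam \<ge> 0" for lam unfolding c_def by (rule c_nonneg)
  have c1: "sum c L = 1" unfolding c_def L_def by (rule c_sum[OF sym])
  have SL: "S \<subseteq> L" using assms(6) unfolding eig_support_def L_def by blast
  have Spos: "lam > 0" if "lam \<in> S" for lam using assms(6) that greaterThan_iff by blast
  have finS: "finite S" using finL SL finite_subset by blast
  have s4: "sum c S \<ge> 1/4" unfolding c_def using assms(7) .
  have cS1: "sum c S \<le> 1" using sum_mono2[OF finL SL] c0 c1 by (metis DiffD1)
  have Luminus: "uminus ` L = L" using Lneg by force
  define g where "g t = (\<Sum>lam\<in>L. c lam * cos (t * lam))" for t
  have fg: "transition A t $ u $ u = complex_of_real (g t)" for t
  proof -
    have "(\<Sum>lam\<in>L. c lam * sin (t * lam)) = (\<Sum>lam\<in>uminus ` L. c lam * sin (t * lam))"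
      using Luminus by simp
    also have "\<dots> = (\<Sum>lam\<in>L. c (- lam) * sin (t * (- lam)))"
      by (subst sum.reindex) (auto simp: inj_on_def)
    also have "\<dots> = - (\<Sum>lam\<in>L. c lam * sin (t * lam))"
      by (simp add: cneg sum_negf)
    finally have im: "(\<Sum>lam\<in>L. c lam * sin (t * lam)) = 0" by simp
    show ?thesis unfolding transition_uu[OF sym]
      by (simp add: complex_eq_iff Re_exp Im_exp Re_sum Im_sum g_def im flip: L_def c_def)
  qed
  have g0: "g 0 = 1" using c1 g_def by simp
  have gcont: "continuous_on X g" for X unfolding g_def by (intro continuous_intros)
  have geven: "g (- t) = g t" for t unfolding g_def by simp
  have key: "g t \<le> 2 * (\<Sum>lam\<in>S. c lam * (1 + cos (t * lam)))" for t
  proof -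
    define F where "F lam = c lam * (1 - cos (t * lam))" for lam
    have F0: "F lam \<ge> 0" for lam unfolding F_def using c0 by simp
    have "g t = sum c L - sum F L" unfolding g_def F_def by (simp add: sum_subtractf[symmetric] algebra_simps)
    then have g1: "g t = 1 - sum F L" using c1 by simp
    define N where "N = uminus ` S"
    have disj: "S \<inter> N = {}"
    proof -
      { fix x assume xs: "x \<in> S" "x \<in> N"
        then obtain y where "y \<in> S" "x = -y" unfolding N_def by auto
        then have False using Spos[of x] Spos[of y] xs by simp }
      then show ?thesis by blast
    qed
    have NL: "N \<subseteq> L" unfolding N_def using SL Lneg by auto
    have finN: "finite N" unfolding N_def using finS by simp
    have SUN: "S \<union> N \<subseteq> L" using SL NL by blast
    have "sum F (S \<union> N) \<le> sum F L" by (rule sum_mono2[OF finL SUN F0])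
    moreover have "sum F (S \<union> N) = sum F S + sum F N" using sum.union_disjoint[OF finS finN disj] .
    moreover have "sum F N = sum F S" unfolding N_def
      by (subst sum.reindex) (auto simp: inj_on_def F_def cneg)
    ultimately have "g t \<le> 1 - 2 * sum F S" using g1 by simp
    also have "\<dots> \<le> 4 * sum c S - 2 * sum F S" using s4 by simp
    also have "\<dots> = (\<Sum>lam\<in>S. 4 * c lam - 2 * F lam)"
      by (simp add: sum_subtractf sum_distrib_left)
    also have "\<dots> = (\<Sum>lam\<in>S. 2 * (c lam * (1 + cos (t * lam))))"
      by (rule sum.cong) (simp_all add: F_def algebra_simps)
    also have "\<dots> = 2 * (\<Sum>lam\<in>S. c lam * (1 + cos (t * lam)))"
      by (simp add: sum_distrib_left)
    finally show ?thesis .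
  qed
  have small2: "\<exists>t>0. g t < \<epsilon>" if "\<epsilon> > 0"
     and e: "\<forall>lam\<in>S. \<exists>m::int. lam = of_int m \<and> multiplicity (2::int) m = e" for \<epsilon> e
  proof -
    define t where "t = pi / 2^e"
    have cosS: "1 + cos (t * lam) = 0" if lamS: "lam \<in> S" for lam
    proof -
      obtain m :: int where m: "lam = of_int m" "multiplicity 2 m = e" using bspec[OF e lamS] by auto
      have "m \<noteq> 0" using Spos[OF lamS] m(1) by auto
      then obtain y where y: "m = 2 ^ multiplicity 2 m * y" "\<not> 2 dvd y"
        using multiplicity_decompose'[of m 2] by auto
      then obtain k where k: "y = 2 * k + 1" using oddE by blast
      have "m = 2 ^ e * y" using y(1) m(2) by simp
      then have "real_of_int m = 2 ^ e * real_of_int y" by simp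
      then have "t * lam = pi * of_int y" unfolding t_def m(1) by simp
      also have "\<dots> = (2 * real_of_int k + 1) * pi" using k by (simp add: algebra_simps)
      finally have "cos (t * lam) = -1" using cos_eq_minus1 by blast
      then show ?thesis by simp
    qed
    have "(\<Sum>lam\<in>S. c lam * (1 + cos (t * lam))) = 0" using cosS by simp
    then have "g t \<le> 0" using key[of t] by simp
    moreover have "t > 0" unfolding t_def by simp
    ultimately show ?thesis using that(1) by (intro exI[of _ t]) simp
  qed
  have small1: "\<exists>t>0. g t < \<epsilon>" if "\<epsilon> > 0" and li: "lin_indep_over_Q S" for \<epsilon>
  proof -
    define \<delta> where "\<delta> = min (1/4) (\<epsilon> / (8 * pi))"
    have dpos: "\<delta> > 0" unfolding \<delta>_def using that by simp
    obtain t0 where t0: "\<forall>lam\<in>S. \<exists>h::int. \<bar>t0 * lam - of_int h - 1/2\<bar> < \<delta>"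
      using kron_S[OF finS li dpos] by blast
    define T where "T = 2 * pi * t0"
    have bnd: "1 + cos (T * lam) \<le> 2 * pi * \<delta>" if lamS: "lam \<in> S" for lam
    proof -
      obtain h :: int where h: "\<bar>t0 * lam - of_int h - 1/2\<bar> < \<delta>" using bspec[OF t0 lamS] by auto
      define d where "d = t0 * lam - of_int h - 1/2"
      have "T * lam = (pi + 2 * pi * d) + of_int h * (2 * pi)" unfolding T_def d_def
        by (simp add: algebra_simps)
      then have "cos (T * lam) = cos (pi + 2 * pi * d)"
        using cos.plus_of_int[of "pi + 2 * pi * d" h] by simp
      also have "\<dots> = - cos (2 * pi * d)" by (simp add: cos_add)
      finally have "1 + cos (T * lam) = 1 - cos (2 * pi * d)" by simp
      also have "\<dots> \<le> \<bar>2 * pi * d\<bar>" by (rule one_minus_cos_le)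
      also have "\<dots> \<le> 2 * pi * \<delta>" using h unfolding d_def by (simp add: abs_mult)
      finally show ?thesis .
    qed
    have "(\<Sum>lam\<in>S. c lam * (1 + cos (T * lam))) \<le> (\<Sum>lam\<in>S. c lam * (2 * pi * \<delta>))"
      by (intro sum_mono mult_left_mono bnd c0)
    also have "\<dots> = sum c S * (2 * pi * \<delta>)" by (simp add: sum_distrib_right)
    also have "\<dots> \<le> 1 * (2 * pi * \<delta>)" using cS1 dpos by (intro mult_right_mono) simp_all
    finally have "g T \<le> 4 * pi * \<delta>" using key[of T] by simp
    also have "\<dots> < \<epsilon>" unfolding \<delta>_def using that pi_gt_zero
      by (simp add: min_def field_simps)
    finally have gT: "g T < \<epsilon>" .
    have "T \<noteq> 0"
    proof
      assume "T = 0"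
      then have "t0 = 0" unfolding T_def by simp
      obtain lam where "lam \<in> S" using assms(5) by blast
      then obtain h :: int where "\<bar>t0 * lam - of_int h - 1/2\<bar> < \<delta>" using bspec[OF t0] by auto
      then have "\<bar>0 - of_int h - 1/2\<bar> < (1/4::real)" using \<open>t0 = 0\<close> \<delta>_def by simp
      then show False using int_half[of h] by simp
    qed
    then have "\<bar>T\<bar> > 0" by simp
    moreover have "g \<bar>T\<bar> < \<epsilon>" using gT geven by (cases "T \<ge> 0") auto
    ultimately show ?thesis by blast
  qed
  show ?thesis
  proof
    assume sed: "sedentary A u"
    define m where "m = (INF t\<in>{0<..}. norm (transition A t $ u $ u))"
    have mpos: "m > 0" using sed unfolding sedentary_def m_def by simp
    have low: "m \<le> \<bar>g t\<bar>" if "t > 0" for t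
    proof -
      have "bdd_below ((\<lambda>t. norm (transition A t $ u $ u)) ` {0<..})"
        by (rule bdd_belowI[of _ 0]) auto
      then have "m \<le> norm (transition A t $ u $ u)" unfolding m_def
        by (rule cINF_lower) (use that in simp)
      then show ?thesis using fg by simp
    qed
    obtain t where t: "t > 0" "g t < m" using small1[OF mpos] small2[OF mpos] assms(8) by blast
    then have "g t \<le> - m" using low[OF t(1)] by linarith
    then have "g t \<le> 0" using mpos by simp
    then obtain x where x: "0 \<le> x" "x \<le> t" "g x = 0"
      using IVT2'[of g t 0 0] g0 t(1) gcont by auto
    then have "x \<noteq> 0" using g0 by auto
    then have "x > 0" using x(1) by simp
    then have "m \<le> \<bar>g x\<bar>" by (rule low)
    then show False using x mpos by simp
  qed
qed

end
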